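(* Let $1\le m\le N$ be integers and let $u$ be a finite (real-valued) function on $\Lambda^m$. Then $G_{N,m}u=0$ $d^Nx$-a.e. on $\Lambda^N$ if and only if $u=0$ $d^mx$-a.e. on $\Lambda^m$. In particular, $G_{N,m}$, viewed as a linear operator on classes of functions modulo a.e. equality, is injective.
   Context: $(\Lambda;dx)$ is a complete $\sigma$-finite measure space with non-zero measure $dx$; for $k\in\mathbb N$, $d^kx$ denotes the completion of the product measure $dx^{\otimes k}$ on $\Lambda^k$. For integers $1\le m\le N$ and a function $u:\Lambda^m\to\mathbb R$ (not assumed symmetric), $$(G_{N,m}u)(x_1,\dots,x_N)=\binom{N}{m}^{-1}\sum_{1\le i_1<\cdots<i_m\le N}u(x_{i_1},\dots,x_{i_m}).$$ *)

theory Defs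
  imports "HOL-Analysis.Analysis" "HOL-Probability.Probability"
begin

text \<open>Lambda^k with measure d^k x: completion of the k-fold product measure.
  Points of Lambda^k are (extensional) functions on {..<k}.\<close>
definition prodM :: "'a measure \<Rightarrow> nat \<Rightarrow> (nat \<Rightarrow> 'a) measure" where
  "prodM M k = completion (PiM {..<k} (\<lambda>_. M))"

definition G :: "nat \<Rightarrow> nat \<Rightarrow> ((nat \<Rightarrow> 'a) \<Rightarrow> real) \<Rightarrow> (nat \<Rightarrow> 'a) \<Rightarrow> real" where
  "G N m u x = (1 / real (N choose m)) *
     (\<Sum>S\<in>{S. S \<subseteq> {..<N} \<and> card S = m}.
        u (\<lambda>j\<in>{..<m}. x (sorted_list_of_set S ! j)))"

end

theory Submission
  imports Defs
begin

definition sel :: "nat set \<Rightarrow> (nat \<Rightarrow> 'a) \<Rightarrow> (nat \<Rightarrow> 'a)" where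
  "sel S x = (\<lambda>j\<in>{..<card S}. x (sorted_list_of_set S ! j))"

definition Phi :: "nat \<Rightarrow> nat \<Rightarrow> (nat set \<Rightarrow> real) \<Rightarrow> ((nat \<Rightarrow> 'a) \<Rightarrow> real) \<Rightarrow> (nat \<Rightarrow> 'a) \<Rightarrow> real" where
  "Phi n k a v x = (\<Sum>S\<in>{S. S \<subseteq> {..<n} \<and> card S = k}. a S * v (sel S x))"

lemma sorted_insert_max:
  assumes "finite R" "\<forall>r\<in>R. r < (j::nat)"
  shows "sorted_list_of_set (insert j R) = sorted_list_of_set R @ [j]"
proof -
  have "sorted (sorted_list_of_set R @ [j]) \<and> distinct (sorted_list_of_set R @ [j]) \<and> set (sorted_list_of_set R @ [j]) = insert j R"
    using assms by (auto simp: sorted_append less_imp_le)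
  moreover have "finite (insert j R)" using assms by simp
  ultimately show ?thesis
    by (metis sorted_list_of_set.idem_if_sorted_distinct)
qed

lemma sel_insert_max:
  assumes "finite R" "\<forall>r\<in>R. r < (j::nat)"
  shows "sel (insert j R) x = (sel R x)(card R := x j)"
proof -
  have jR: "j \<notin> R" using assms by auto
  show ?thesis
    unfolding sel_def sorted_insert_max[OF assms] using assms jR
    by (auto simp: nth_append fun_eq_iff less_Suc_eq)
qed

lemma sel_cong:
  assumes "finite S" "\<And>i. i \<in> S \<Longrightarrow> x i = y i"
  shows "sel S x = sel S y"
  unfolding sel_def using assms
  by (auto simp: fun_eq_iff intro!: assms(2)) (metis nth_mem sorted_list_of_set.length_sorted_key_list_of_set sorted_list_of_set.set_sorted_key_list_of_set)

lemma sel_upd_out: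
  assumes "finite S" "n \<notin> S"
  shows "sel S (x(n:=t)) = sel S x"
  using assms by (intro sel_cong) auto

lemma sel_restrict:
  assumes "finite S" "S \<subseteq> I"
  shows "sel S (restrict x I) = sel S x"
  using assms by (intro sel_cong) auto

lemma Phi_upd_out: "Phi n k a v (z(n:=t)) = Phi n k a v z"
  unfolding Phi_def
  apply (rule sum.cong[OF refl])
  subgoal for S using finite_subset[of S "{..<n}"] sel_upd_out[of S n z t] by (fastforce simp: subset_iff)
  done

lemma Phi_diff: "Phi n k a (\<lambda>w. f w - g w) x = Phi n k a f x - Phi n k a g x"
  unfolding Phi_def by (simp add: sum_subtractf right_diff_distrib)

lemma Phi_split:
  "Phi (Suc n) (Suc k) a v (z(n:=t)) = Phi n (Suc k) a v z + Phi n k (\<lambda>T. a (insert n T)) (\<lambda>w. v (w(k:=t))) z"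
proof -
  let ?A = "{S. S \<subseteq> {..<Suc n} \<and> card S = Suc k}"
  let ?A1 = "{S. S \<subseteq> {..<n} \<and> card S = Suc k}"
  let ?A2 = "{T. T \<subseteq> {..<n} \<and> card T = k}"
  have fin1: "finite ?A1" by (rule finite_subset[of _ "Pow {..<n}"]) auto
  have fin2: "finite ?A2" by (rule finite_subset[of _ "Pow {..<n}"]) auto
  have eqA: "?A = ?A1 \<union> insert n ` ?A2"
  proof (intro equalityI subsetI)
    fix S assume S: "S \<in> ?A"
    show "S \<in> ?A1 \<union> insert n ` ?A2"
    proof (cases "n \<in> S")
      case True
      have finS: "finite S" using S finite_subset by auto
      have "S - {n} \<in> ?A2" using S True finS by (auto simp: less_Suc_eq)
      moreover have "S = insert n (S - {n})" using True by auto
      ultimately show ?thesis by blast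
    next
      case False then show ?thesis using S by (auto simp: less_Suc_eq)
    qed
  next
    fix S assume "S \<in> ?A1 \<union> insert n ` ?A2"
    then show "S \<in> ?A"
    proof
      assume "S \<in> ?A1" then show ?thesis by auto
    next
      assume "S \<in> insert n ` ?A2"
      then obtain T where T: "T \<in> ?A2" "S = insert n T" by auto
      have "finite T" "n \<notin> T" using T finite_subset by auto
      then show ?thesis using T by auto
    qed
  qed
  have disj: "?A1 \<inter> insert n ` ?A2 = {}" by auto
  have inj: "inj_on (insert n) ?A2"
    by (rule inj_onI) (metis Diff_insert_absorb lessThan_iff less_irrefl mem_Collect_eq subsetD)
  have t1: "a S * v (sel S (z(n:=t))) = a S * v (sel S z)" if "S \<in> ?A1" for S
    using that finite_subset[of S "{..<n}"] by (subst sel_upd_out) auto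
  have t2: "a (insert n T) * v (sel (insert n T) (z(n:=t))) = a (insert n T) * v ((sel T z)(k:=t))" if T: "T \<in> ?A2" for T
  proof -
    have fT: "finite T" using T finite_subset by auto
    have lt: "\<forall>r\<in>T. r < n" using T by auto
    have "n \<notin> T" using lt by auto
    then show ?thesis using T sel_insert_max[OF fT lt, of "z(n:=t)"] sel_upd_out[OF fT, of n z t] by simp
  qed
  have "Phi (Suc n) (Suc k) a v (z(n:=t)) = (\<Sum>S\<in>?A1. a S * v (sel S (z(n:=t)))) + (\<Sum>S\<in>insert n ` ?A2. a S * v (sel S (z(n:=t))))"
    unfolding Phi_def eqA by (rule sum.union_disjoint) (use fin1 fin2 disj in auto)
  also have "\<dots> = Phi n (Suc k) a v z + (\<Sum>T\<in>?A2. a (insert n T) * v (sel (insert n T) (z(n:=t))))"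
  proof -
    have "(\<Sum>S\<in>?A1. a S * v (sel S (z(n:=t)))) = Phi n (Suc k) a v z"
      unfolding Phi_def by (rule sum.cong) (auto simp: t1)
    then show ?thesis by (simp add: sum.reindex[OF inj])
  qed
  also have "\<dots> = Phi n (Suc k) a v z + Phi n k (\<lambda>T. a (insert n T)) (\<lambda>w. v (w(k:=t))) z"
    unfolding Phi_def by (intro arg_cong2[where f="(+)"] refl sum.cong) (auto simp: t2)
  finally show ?thesis .
qed

lemma Phi_collapse:
  "Phi (Suc n) (Suc k) a (\<lambda>y. w0 (restrict y {..<k})) x
   = Phi n k (\<lambda>R. \<Sum>j\<in>{j. j < Suc n \<and> (\<forall>r\<in>R. r < j)}. a (insert j R)) w0 x"
proof -
  let ?A = "{S. S \<subseteq> {..<Suc n} \<and> card S = Suc k}"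
  let ?A2 = "{R. R \<subseteq> {..<n} \<and> card R = k}"
  let ?J = "\<lambda>R. {j. j < Suc n \<and> (\<forall>r\<in>R. r < j)}"
  have fin2: "finite ?A2" by (rule finite_subset[of _ "Pow {..<n}"]) auto
  have finJ: "finite (?J R)" for R by auto
  have bij: "bij_betw (\<lambda>(R,j). insert j R) (Sigma ?A2 ?J) ?A"
  proof (rule bij_betw_byWitness[where f'="\<lambda>S. (S - {Max S}, Max S)"])
    show "\<forall>p\<in>Sigma ?A2 ?J. (\<lambda>S. (S - {Max S}, Max S)) ((\<lambda>(R,j). insert j R) p) = p"
    proof
      fix p assume p: "p \<in> Sigma ?A2 ?J"
      obtain R j where pRj: "p = (R,j)" by (cases p)
      have fR: "finite R" using p pRj finite_subset by auto
      have lt: "\<forall>r\<in>R. r < j" using p pRj by auto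
      have "Max (insert j R) = j" using fR lt by (simp add: Max_insert2 less_imp_le)
      moreover have "insert j R - {j} = R" using lt by auto
      ultimately show "(\<lambda>S. (S - {Max S}, Max S)) ((\<lambda>(R,j). insert j R) p) = p" using pRj by simp
    qed
    show "\<forall>S\<in>?A. (\<lambda>(R,j). insert j R) ((\<lambda>S. (S - {Max S}, Max S)) S) = S"
    proof
      fix S assume S: "S \<in> ?A"
      have fS: "finite S" using S finite_subset by auto
      have ne: "S \<noteq> {}" using S by auto
      show "(\<lambda>(R,j). insert j R) ((\<lambda>S. (S - {Max S}, Max S)) S) = S"
        using Max_in[OF fS ne] by auto
    qed
    show "(\<lambda>(R,j). insert j R) ` Sigma ?A2 ?J \<subseteq> ?A"
    proof
      fix S assume "S \<in> (\<lambda>(R,j). insert j R) ` Sigma ?A2 ?J"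
      then obtain R j where R: "R \<in> ?A2" "j \<in> ?J R" "S = insert j R" by auto
      have fR: "finite R" using R finite_subset by auto
      have "j \<notin> R" using R by auto
      then show "S \<in> ?A" using R fR by (auto simp: less_Suc_eq)
    qed
    show "(\<lambda>S. (S - {Max S}, Max S)) ` ?A \<subseteq> Sigma ?A2 ?J"
    proof
      fix p assume "p \<in> (\<lambda>S. (S - {Max S}, Max S)) ` ?A"
      then obtain S where S: "S \<in> ?A" "p = (S - {Max S}, Max S)" by auto
      have fS: "finite S" using S finite_subset by auto
      have ne: "S \<noteq> {}" using S by auto
      have MS: "Max S \<in> S" using Max_in[OF fS ne] .
      have Mlt: "Max S < Suc n" using MS S by auto
      have rlt: "\<forall>r\<in>S - {Max S}. r < Max S" using fS by (auto intro: le_neq_implies_less Max_ge)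
      have "S - {Max S} \<subseteq> {..<n}"
      proof
        fix r assume "r \<in> S - {Max S}"
        then have "r < Max S" using rlt by blast
        then show "r \<in> {..<n}" using Mlt by simp
      qed
      moreover have "card (S - {Max S}) = k" using S MS fS by simp
      ultimately show "p \<in> Sigma ?A2 ?J" using S rlt Mlt by auto
    qed
  qed
  have tm: "a (insert j R) * w0 (restrict (sel (insert j R) x) {..<k}) = a (insert j R) * w0 (sel R x)"
    if "(R,j) \<in> Sigma ?A2 ?J" for R j
  proof -
    have fR: "finite R" using that finite_subset by auto
    have lt: "\<forall>r\<in>R. r < j" using that by auto
    have ck: "card R = k" using that by auto
    have "restrict ((sel R x)(k := x j)) {..<k} = sel R x"
      by (auto simp: fun_eq_iff sel_def ck)
    then show ?thesis using sel_insert_max[OF fR lt, of x] ck by simp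
  qed
  have "Phi (Suc n) (Suc k) a (\<lambda>y. w0 (restrict y {..<k})) x
      = (\<Sum>p\<in>Sigma ?A2 ?J. (\<lambda>S. a S * w0 (restrict (sel S x) {..<k})) ((\<lambda>(R,j). insert j R) p))"
    unfolding Phi_def by (rule sum.reindex_bij_betw[OF bij, symmetric])
  also have "\<dots> = (\<Sum>p\<in>Sigma ?A2 ?J. (\<lambda>(R,j). a (insert j R) * w0 (sel R x)) p)"
    apply (rule sum.cong[OF refl])
    subgoal for p by (cases p) (simp only: prod.case, rule tm, simp)
    done
  also have "\<dots> = (\<Sum>R\<in>?A2. \<Sum>j\<in>?J R. a (insert j R) * w0 (sel R x))"
    by (rule sum.Sigma[symmetric]) (use fin2 finJ in auto)
  also have "\<dots> = Phi n k (\<lambda>R. \<Sum>j\<in>{j. j < Suc n \<and> (\<forall>r\<in>R. r < j)}. a (insert j R)) w0 x"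
    unfolding Phi_def by (simp add: sum_distrib_right)
  finally show ?thesis .
qed

locale LM = sigma_finite_measure M for M :: "'a measure" +
  assumes nz: "emeasure M (space M) \<noteq> 0"
begin

abbreviation P :: "nat \<Rightarrow> (nat \<Rightarrow> 'a) measure" where
  "P n \<equiv> PiM {..<n} (\<lambda>_. M)"

lemma psf: "product_sigma_finite (\<lambda>_. M)"
  unfolding product_sigma_finite_def using sigma_finite_measure_axioms by simp

lemma sfP: "sigma_finite_measure (P n)"
  by (rule product_sigma_finite.sigma_finite[OF psf]) simp

lemma psfP: "pair_sigma_finite (P n) M"
  unfolding pair_sigma_finite_def using sfP sigma_finite_measure_axioms by simp

lemma iter: "distr (P n \<Otimes>\<^sub>M M) (P (Suc n)) (\<lambda>(x,y). x(n:=y)) = P (Suc n)"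
proof (rule product_sigma_finite.PiM_eqI[OF psf])
  interpret I: finite_product_sigma_finite "\<lambda>_. M" "{..<n}"
    using psf by (simp add: finite_product_sigma_finite_def finite_product_sigma_finite_axioms_def)
  interpret S: finite_product_sigma_finite "\<lambda>_. M" "{..<Suc n}"
    using psf by (simp add: finite_product_sigma_finite_def finite_product_sigma_finite_axioms_def)
  interpret Q: pair_sigma_finite "P n" M by (rule psfP)
  have meas: "(\<lambda>(x,y). x(n:=y)) \<in> measurable (P n \<Otimes>\<^sub>M M) (P (Suc n))"
    using measurable_fun_upd[where J="{..<n}" and I="{..<Suc n}" and f=fst and h=snd and N="P n \<Otimes>\<^sub>M M" and M="\<lambda>_. M" and i=n]
    by (auto simp: lessThan_Suc split_beta')
  fix A assume A: "\<And>i. i \<in> {..<Suc n} \<Longrightarrow> A i \<in> sets M"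
  have *: "(\<lambda>(x,y). x(n:=y)) -` Pi\<^sub>E {..<Suc n} A \<inter> space (P n \<Otimes>\<^sub>M M) = Pi\<^sub>E {..<n} A \<times> A n"
    using A[THEN sets.sets_into_space] apply (auto simp: space_PiM space_pair_measure PiE_iff extensional_def less_Suc_eq)
    apply (metis lessThan_iff less_SucI less_irrefl)
    by (metis lessThan_iff lessI)
  have s1: "Pi\<^sub>E {..<n} A \<in> sets (P n)" using A by (auto intro!: sets_PiM_I_finite)
  have s2: "A n \<in> sets M" using A by auto
  have s3: "Pi\<^sub>E {..<Suc n} A \<in> sets (P (Suc n))" using A by (auto intro!: sets_PiM_I_finite)
  have "emeasure (distr (P n \<Otimes>\<^sub>M M) (P (Suc n)) (\<lambda>(x,y). x(n:=y))) (Pi\<^sub>E {..<Suc n} A)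
     = emeasure (P n \<Otimes>\<^sub>M M) (Pi\<^sub>E {..<n} A \<times> A n)"
    using emeasure_distr[OF meas s3] * by simp
  also have "\<dots> = (\<Prod>i\<in>{..<n}. emeasure M (A i)) * emeasure M (A n)"
    using emeasure_pair_measure_Times[OF s1 s2] I.measure_times[of A] A by simp
  finally show "emeasure (distr (P n \<Otimes>\<^sub>M M) (P (Suc n)) (\<lambda>(x,y). x(n:=y))) (Pi\<^sub>E {..<Suc n} A) = (\<Prod>i\<in>{..<Suc n}. emeasure M (A i))"
    by simp
qed (auto)

lemma AE_Suc:
  assumes "Measurable.pred (P (Suc n)) Q"
  shows "(AE x in P (Suc n). Q x) \<longleftrightarrow> (AE z in P n. AE t in M. Q (z(n:=t)))"
proof -
  interpret Q: pair_sigma_finite "P n" M by (rule psfP)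
  have meas: "(\<lambda>(x,y). x(n:=y)) \<in> measurable (P n \<Otimes>\<^sub>M M) (P (Suc n))"
    using measurable_fun_upd[where J="{..<n}" and I="{..<Suc n}" and f=fst and h=snd and N="P n \<Otimes>\<^sub>M M" and M="\<lambda>_. M" and i=n]
    by (auto simp: lessThan_Suc split_beta')
  have "(AE x in P (Suc n). Q x) \<longleftrightarrow> (AE x in P n \<Otimes>\<^sub>M M. Q ((\<lambda>(x,y). x(n:=y)) x))"
    by (subst iter[symmetric], rule AE_distr_iff[OF meas]) (use assms in simp)
  also have "\<dots> \<longleftrightarrow> (AE z in P n. AE t in M. Q (z(n:=t)))"
  proof (subst Q.AE_pair_iff)
    have "(\<lambda>(x,y). x(n:=y)) -` {x \<in> space (P (Suc n)). Q x} \<inter> space (P n \<Otimes>\<^sub>M M) \<in> sets (P n \<Otimes>\<^sub>M M)"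
      using measurable_sets[OF meas assms[unfolded pred_def]] .
    moreover have "(\<lambda>(x,y). x(n:=y)) -` {x \<in> space (P (Suc n)). Q x} \<inter> space (P n \<Otimes>\<^sub>M M)
       = {x\<in>space (P n \<Otimes>\<^sub>M M). Q ((fst x)(n := snd x))}"
      using measurable_space[OF meas] by (auto simp: split_beta')
    ultimately show "{x\<in>space (P n \<Otimes>\<^sub>M M). Q ((fst x)(n := snd x))} \<in> sets (P n \<Otimes>\<^sub>M M)" by simp
  qed (simp add: split_beta')
  finally show ?thesis .
qed

lemma nzP: "emeasure (P n) (space (P n)) \<noteq> 0"
proof -
  interpret I: finite_product_sigma_finite "\<lambda>_. M" "{..<n}"
    using psf by (simp add: finite_product_sigma_finite_def finite_product_sigma_finite_axioms_def)
  have "space (P n) = Pi\<^sub>E {..<n} (\<lambda>_. space M)" by (simp add: space_PiM)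
  then show ?thesis using nz by (simp add: I.measure_times)
qed

lemma AE_constP: "(AE x in P n. Q) \<longleftrightarrow> Q"
  using nzP by (intro eventually_const) (simp add: trivial_limit_def[symmetric] ae_filter_eq_bot_iff)

lemma AE_constM: "(AE x in M. Q) \<longleftrightarrow> Q"
  using nz by (intro eventually_const) (simp add: trivial_limit_def[symmetric] ae_filter_eq_bot_iff)

lemma pred_AE:
  assumes "Measurable.pred (N \<Otimes>\<^sub>M M) (\<lambda>p. Q (fst p) (snd p))"
  shows "Measurable.pred N (\<lambda>w. AE t in M. Q w t)"
proof -
  let ?B = "{p \<in> space (N \<Otimes>\<^sub>M M). \<not> Q (fst p) (snd p)}"
  have B: "?B \<in> sets (N \<Otimes>\<^sub>M M)" using assms by (simp add: pred_def set_diff_eq[symmetric] sets.Diff) 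
  have f: "(\<lambda>w. emeasure M (Pair w -` ?B)) \<in> borel_measurable N"
    by (rule measurable_emeasure_Pair[OF B])
  have eq: "(AE t in M. Q w t) \<longleftrightarrow> emeasure M (Pair w -` ?B) = 0" if w: "w \<in> space N" for w
  proof -
    have "Pair w -` ?B = {t \<in> space M. \<not> Q w t}" using w by (auto simp: space_pair_measure)
    moreover have "{t \<in> space M. \<not> Q w t} \<in> sets M"
      using sets_Pair1[OF B, of w] \<open>Pair w -` ?B = _\<close> by simp
    ultimately show ?thesis by (simp add: AE_iff_measurable[OF _ refl])
  qed
  have "Measurable.pred N (\<lambda>w. emeasure M (Pair w -` ?B) = 0)" using f by measurable
  then show ?thesis by (rule measurable_cong[THEN iffD1, rotated]) (simp add: eq)
qed

lemma measurable_sel: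
  assumes "S \<subseteq> {..<n}"
  shows "sel S \<in> measurable (P n) (P (card S))"
  unfolding sel_def
proof (rule measurable_restrict)
  fix j assume j: "j \<in> {..<card S}"
  have fin: "finite S" using assms finite_subset by blast
  have "sorted_list_of_set S ! j \<in> S"
    using j fin by (metis lessThan_iff nth_mem sorted_list_of_set.length_sorted_key_list_of_set sorted_list_of_set.set_sorted_key_list_of_set)
  then have "sorted_list_of_set S ! j \<in> {..<n}" using assms by blast
  then show "(\<lambda>x. x (sorted_list_of_set S ! j)) \<in> measurable (P n) M"
    by (rule measurable_component_singleton)
qed

lemma space_P0: "space (P 0) = {\<lambda>_. undefined}"
  by (simp add: space_PiM)

lemma AE_sel:
  assumes "S \<subseteq> {..<n}" "Measurable.pred (P (card S)) Q" "AE y in P (card S). Q y"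
  shows "AE x in P n. Q (sel S x)"
  using assms
proof (induction n arbitrary: S Q)
  case 0
  then have S: "S = {}" by auto
  have "AE y in P 0. Q (\<lambda>_. undefined)"
  proof -
    have "AE y in P 0. Q y" using 0(3) S by (metis card.empty)
    with AE_space[of "P 0"] show ?thesis by eventually_elim (simp add: space_PiM)
  qed
  then have "Q (\<lambda>_. undefined)" by (simp add: AE_constP)
  then show ?case by (simp add: S sel_def)
next
  case (Suc n)
  have predS: "Measurable.pred (P (Suc n)) (\<lambda>x. Q (sel S x))"
    using measurable_compose[OF measurable_sel[OF Suc.prems(1)] Suc.prems(2)] by (simp add: comp_def)
  have finS: "finite S" using Suc.prems(1) finite_subset by blast
  show ?case
  proof (cases "n \<in> S")
    case False
    then have Sn: "S \<subseteq> {..<n}" using Suc.prems(1) by (auto simp: less_Suc_eq)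
    have "AE z in P n. Q (sel S z)" by (rule Suc.IH[OF Sn Suc.prems(2,3)])
    then have "AE z in P n. AE t in M. Q (sel S (z(n:=t)))"
      by eventually_elim (simp add: sel_upd_out[OF finS False] AE_constM)
    then show ?thesis by (simp add: AE_Suc[OF predS])
  next
    case True
    define R where "R = S - {n}"
    have SR: "S = insert n R" using True R_def by auto
    have Rn: "R \<subseteq> {..<n}" using Suc.prems(1) R_def by (auto simp: less_Suc_eq)
    have finR: "finite R" using Rn finite_subset by blast
    have cS: "card S = Suc (card R)" unfolding R_def using True finS by (metis card_Suc_Diff1)
    have Rlt: "\<forall>r\<in>R. r < n" using Rn by auto
    have predQ: "Measurable.pred (P (Suc (card R))) Q" using Suc.prems(2) cS by simp
    have predQ2: "Measurable.pred (P (card R) \<Otimes>\<^sub>M M) (\<lambda>p. Q ((fst p)(card R := snd p)))"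
    proof -
      have "(\<lambda>p. (fst p)(card R := snd p)) \<in> measurable (P (card R) \<Otimes>\<^sub>M M) (P (Suc (card R)))"
        using measurable_fun_upd[where J="{..<card R}" and I="{..<Suc (card R)}" and f=fst and h=snd and N="P (card R) \<Otimes>\<^sub>M M" and M="\<lambda>_. M" and i="card R"]
        by (auto simp: lessThan_Suc)
      from measurable_compose[OF this predQ] show ?thesis by (simp add: comp_def)
    qed
    have predR: "Measurable.pred (P (card R)) (\<lambda>w. AE t in M. Q (w(card R := t)))"
      using pred_AE[OF predQ2] by (simp only: fst_conv snd_conv)
    have "AE w in P (card R). AE t in M. Q (w(card R := t))"
      using Suc.prems(3) cS AE_Suc[OF predQ] by metis
    then have "AE z in P n. AE t in M. Q ((sel R z)(card R := t))"
      using Suc.IH[OF Rn predR] by (simp add: fun_upd_def)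
    then have "AE z in P n. AE t in M. Q (sel S (z(n:=t)))"
    proof eventually_elim
      case (elim z)
      have "sel S (z(n:=t)) = (sel R z)(card R := t)" for t
        unfolding SR sel_insert_max[OF finR Rlt] using sel_upd_out[OF finR, of n z t] Rlt by auto
      then show ?case using elim by simp
    qed
    then show ?thesis by (simp add: AE_Suc[OF predS])
  qed
qed

lemma measurable_Phi:
  assumes "v \<in> borel_measurable (P k)" "n \<le> m"
  shows "Phi n k a v \<in> borel_measurable (P m)"
  unfolding Phi_def
proof (rule borel_measurable_sum)
  fix S assume "S \<in> {S. S \<subseteq> {..<n} \<and> card S = k}"
  then have S: "S \<subseteq> {..<m}" "card S = k" using assms(2) by auto
  have "(\<lambda>x. v (sel S x)) \<in> borel_measurable (P m)"
    using measurable_compose[OF measurable_sel[OF S(1)]] assms S(2) by (simp add: comp_def)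
  then show "(\<lambda>x. a S * v (sel S x)) \<in> borel_measurable (P m)" by measurable
qed

lemma meas_upd: "(\<lambda>p. (fst p)(k := snd p)) \<in> measurable (P k \<Otimes>\<^sub>M M) (P (Suc k))"
  using measurable_fun_upd[where J="{..<k}" and I="{..<Suc k}" and f=fst and h=snd and N="P k \<Otimes>\<^sub>M M" and M="\<lambda>_. M" and i=k]
  by (auto simp: lessThan_Suc)

lemma meas_upd_const: "t \<in> space M \<Longrightarrow> (\<lambda>w. w(k := t)) \<in> measurable (P k) (P (Suc k))"
  using measurable_fun_upd[where J="{..<k}" and I="{..<Suc k}" and f="\<lambda>w. w" and h="\<lambda>_. t" and N="P k" and M="\<lambda>_. M" and i=k]
  by (auto simp: lessThan_Suc)

lemma Phi0: "Phi n 0 a v x = a {} * v (\<lambda>_. undefined)"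
proof -
  have "{S. S \<subseteq> {..<n} \<and> card S = 0} = {{}}"
    by (auto dest: finite_subset)
  then show ?thesis by (simp add: Phi_def sel_def restrict_def)
qed

lemma AE_ex: "AE t in M. R t \<Longrightarrow> \<exists>t\<in>space M. R t"
proof (rule ccontr)
  assume a: "AE t in M. R t" "\<not> (\<exists>t\<in>space M. R t)"
  have "AE t in M. False" using a(1) AE_space[of M] by eventually_elim (use a(2) in auto)
  then show False by (simp add: AE_constM)
qed

lemma main:
  "k \<le> n \<Longrightarrow> (\<forall>S. S \<subseteq> {..<n} \<and> card S = k \<longrightarrow> a S > 0) \<Longrightarrow> v \<in> borel_measurable (P k)
   \<Longrightarrow> (AE x in P n. Phi n k a v x = 0) \<Longrightarrow> (AE y in P k. v y = 0)"
proof (induction k arbitrary: n a v)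
  case 0
  have "a {} * v (\<lambda>_. undefined) = 0" using 0(4) by (simp add: Phi0 AE_constP)
  moreover have "a {} > 0" using 0(2) by auto
  ultimately have "v (\<lambda>_. undefined) = 0" by simp
  then show ?case by (intro AE_I2) (simp add: space_PiM)
next
  case (Suc k)
  obtain n' where n: "n = Suc n'" using Suc.prems(1) by (cases n) auto
  have kn: "k \<le> n'" using Suc.prems(1) n by simp
  have vm: "v \<in> borel_measurable (P (Suc k))" using Suc.prems(3) .
  define a' where "a' T = a (insert n' T)" for T
  have a'pos: "\<forall>T. T \<subseteq> {..<n'} \<and> card T = k \<longrightarrow> a' T > 0"
  proof (intro allI impI)
    fix T assume T: "T \<subseteq> {..<n'} \<and> card T = k"
    have "finite T" "n' \<notin> T" using T finite_subset by auto
    then have "insert n' T \<subseteq> {..<n} \<and> card (insert n' T) = Suc k" using T n by auto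
    then show "a' T > 0" using Suc.prems(2) a'_def by auto
  qed
  define A where "A z = Phi n' (Suc k) a v z" for z
  define B where "B z t = Phi n' k a' (\<lambda>w. v (w(k:=t))) z" for z t
  have split: "Phi n (Suc k) a v (z(n':=t)) = A z + B z t" for z t
    unfolding n A_def B_def a'_def by (rule Phi_split)
  have PhiM: "Phi n (Suc k) a v \<in> borel_measurable (P n)" by (rule measurable_Phi[OF vm order_refl])
  have predPhi: "Measurable.pred (P (Suc n')) (\<lambda>x. Phi n (Suc k) a v x = 0)"
    using PhiM unfolding n by measurable
  have predPhi2: "Measurable.pred (P n' \<Otimes>\<^sub>M M) (\<lambda>p. A (fst p) + B (fst p) (snd p) = 0)"
  proof -
    have "Measurable.pred (P n' \<Otimes>\<^sub>M M) (\<lambda>p. Phi n (Suc k) a v ((fst p)(n' := snd p)) = 0)"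
      using measurable_compose[OF meas_upd predPhi] by (simp add: comp_def)
    then show ?thesis by (simp add: split)
  qed
  interpret Q: pair_sigma_finite "P n'" M by (rule psfP)
  have h: "AE x in P (Suc n'). Phi n (Suc k) a v x = 0" using Suc.prems(4) unfolding n .
  have "AE z in P n'. AE t in M. A z + B z t = 0"
    using h unfolding AE_Suc[OF predPhi] by (simp only: split)
  then have "AE t in M. AE z in P n'. A z + B z t = 0"
    using Q.AE_commute[of "\<lambda>z t. A z + B z t = 0"] predPhi2 by (simp add: pred_def)
  then obtain t0 where t0: "t0 \<in> space M" "AE z in P n'. A z + B z t0 = 0"
    using AE_ex[of "\<lambda>t. AE z in P n'. A z + B z t = 0"] by auto
  have vt: "(\<lambda>w. v (w(k:=t))) \<in> borel_measurable (P k)" if "t \<in> space M" for t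
    using measurable_compose[OF meas_upd_const[OF that] vm] by (simp add: comp_def)
  have "AE t in M. AE w in P k. v (w(k:=t)) - v (w(k:=t0)) = 0"
    using \<open>AE t in M. AE z in P n'. A z + B z t = 0\<close> AE_space
  proof eventually_elim
    case (elim t)
    have "AE z in P n'. Phi n' k a' (\<lambda>w. v (w(k:=t)) - v (w(k:=t0))) z = 0"
      using elim(1) t0(2) by eventually_elim (simp add: Phi_diff B_def[symmetric])
    moreover have "(\<lambda>w. v (w(k:=t)) - v (w(k:=t0))) \<in> borel_measurable (P k)"
      using vt[OF elim(2)] vt[OF t0(1)] by measurable
    ultimately show ?case using Suc.IH[OF kn a'pos] by blast
  qed
  then have AEt: "AE t in M. AE w in P k. v (w(k:=t)) = v (w(k:=t0))" by simp
  interpret Q2: pair_sigma_finite "P k" M by (rule psfP)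
  have predv2: "Measurable.pred (P k \<Otimes>\<^sub>M M) (\<lambda>p. v ((fst p)(k:=snd p)) = v ((fst p)(k:=t0)))"
  proof -
    have f1: "(\<lambda>p. v ((fst p)(k:=snd p))) \<in> borel_measurable (P k \<Otimes>\<^sub>M M)"
      using measurable_compose[OF meas_upd vm] by (simp add: comp_def)
    have f2: "(\<lambda>p. v ((fst p)(k:=t0))) \<in> borel_measurable (P k \<Otimes>\<^sub>M M)"
      using measurable_compose[OF measurable_fst[of "P k" M] vt[OF t0(1)]] by (simp add: comp_def)
    show ?thesis using f1 f2 by measurable
  qed
  have AEw: "AE w in P k. AE t in M. v (w(k:=t)) = v (w(k:=t0))"
    using AEt Q2.AE_commute[of "\<lambda>w t. v (w(k:=t)) = v (w(k:=t0))"] predv2 by (simp add: pred_def)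
  define w0 where "w0 w = v (w(k:=t0))" for w
  have w0m: "w0 \<in> borel_measurable (P k)" unfolding w0_def by (rule vt[OF t0(1)])
  have resm: "(\<lambda>y. restrict y {..<k}) \<in> measurable (P (Suc k)) (P k)"
    by (rule measurable_restrict_subset) auto
  have w0rm: "(\<lambda>y. w0 (restrict y {..<k})) \<in> borel_measurable (P (Suc k))"
    using measurable_compose[OF resm w0m] by (simp add: comp_def)
  have predvw: "Measurable.pred (P (Suc k)) (\<lambda>y. v y = w0 (restrict y {..<k}))"
    unfolding pred_def by (rule borel_measurable_eq[OF vm w0rm])
  have resupd: "restrict (w(k:=t)) {..<k} = w" if "w \<in> space (P k)" for w t
    using that by (auto simp: space_PiM fun_eq_iff PiE_def extensional_def)
  have AEv: "AE y in P (Suc k). v y = w0 (restrict y {..<k})"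
    unfolding AE_Suc[OF predvw]
    using AEw AE_space
  proof eventually_elim
    case (elim z)
    have "\<And>t. restrict (z(k:=t)) {..<k} = z" using resupd[OF elim(2)] by blast
    then show ?case using elim(1) by (simp add: w0_def)
  qed
  let ?SS = "{S. S \<subseteq> {..<n} \<and> card S = Suc k}"
  have finSS: "finite ?SS" by (rule finite_subset[of _ "Pow {..<n}"]) auto
  have "AE x in P n. \<forall>S\<in>?SS. v (sel S x) = w0 (restrict (sel S x) {..<k})"
  proof (rule AE_finite_allI[OF finSS])
    fix S assume S: "S \<in> ?SS"
    then have S1: "S \<subseteq> {..<n}" and c: "card S = Suc k" by auto
    show "AE x in P n. v (sel S x) = w0 (restrict (sel S x) {..<k})"
    proof (rule AE_sel[OF S1])
      show "Measurable.pred (P (card S)) (\<lambda>y. v y = w0 (restrict y {..<k}))"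
        by (subst c) (rule predvw)
      show "AE y in P (card S). v y = w0 (restrict y {..<k})"
        by (subst c) (rule AEv)
    qed
  qed
  then have AEeq: "AE x in P n. Phi n (Suc k) a v x = Phi n (Suc k) a (\<lambda>y. w0 (restrict y {..<k})) x"
    by eventually_elim (auto simp: Phi_def intro!: sum.cong)
  define b where "b R = (\<Sum>j\<in>{j. j < Suc n' \<and> (\<forall>r\<in>R. r < j)}. a (insert j R))" for R
  have "AE x in P (Suc n'). Phi n' k b w0 x = 0"
    using AEeq Suc.prems(4) unfolding n
    by eventually_elim (simp add: b_def[abs_def] Phi_collapse)
  moreover have predb: "Measurable.pred (P (Suc n')) (\<lambda>x. Phi n' k b w0 x = 0)"
    using measurable_Phi[OF w0m, of n' "Suc n'" b] by measurable
  ultimately have "AE z in P n'. AE t in M. Phi n' k b w0 (z(n':=t)) = 0"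
    using AE_Suc[OF predb] by simp
  then have AEb: "AE z in P n'. Phi n' k b w0 z = 0"
    by eventually_elim (simp add: Phi_upd_out AE_constM)
  have bpos: "\<forall>R. R \<subseteq> {..<n'} \<and> card R = k \<longrightarrow> b R > 0"
  proof (intro allI impI)
    fix R assume R: "R \<subseteq> {..<n'} \<and> card R = k"
    have fR: "finite R" using R finite_subset by auto
    have "a (insert j R) > 0" if "j \<in> {j. j < Suc n' \<and> (\<forall>r\<in>R. r < j)}" for j
    proof -
      have "j \<notin> R" using that by auto
      then have "insert j R \<subseteq> {..<n} \<and> card (insert j R) = Suc k" using R that fR n by auto
      then show ?thesis using Suc.prems(2) by auto
    qed
    moreover have "n' \<in> {j. j < Suc n' \<and> (\<forall>r\<in>R. r < j)}" using R by auto
    ultimately show "b R > 0" unfolding b_def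
      by (intro sum_pos) auto
  qed
  have AEw0: "AE w in P k. w0 w = 0" by (rule Suc.IH[OF kn bpos w0m AEb])
  have predw0: "Measurable.pred (P (Suc k)) (\<lambda>y. w0 (restrict y {..<k}) = 0)"
    unfolding pred_def by (rule borel_measurable_eq[OF w0rm borel_measurable_const])
  have "AE y in P (Suc k). w0 (restrict y {..<k}) = 0"
    unfolding AE_Suc[OF predw0]
    using AEw0 AE_space
  proof eventually_elim
    case (elim z)
    have "\<And>t. restrict (z(k:=t)) {..<k} = z" using resupd[OF elim(2)] by blast
    then show ?case using elim(1) by (simp add: AE_constM)
  qed
  then show ?case using AEv by eventually_elim simp
qed

lemma G_Phi: "G N m u x = (1 / real (N choose m)) * Phi N m (\<lambda>_. 1) u x"
  unfolding G_def Phi_def sel_def by (auto intro!: sum.cong arg_cong[where f=u])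

lemma G_iff:
  assumes u: "u \<in> borel_measurable (prodM M m)" and m: "1 \<le> m" "m \<le> N"
  shows "(AE x in prodM M N. G N m u x = 0) \<longleftrightarrow> (AE y in prodM M m. u y = 0)"
proof -
  have u': "u \<in> borel_measurable (completion (P m))" using u by (simp add: prodM_def)
  obtain f where f: "f \<in> borel_measurable (P m)" "AE y in P m. u y = f y"
    using completion_ex_borel_measurable_real[OF u'] by auto
  obtain Nn where Nn: "{y \<in> space (P m). \<not> u y = f y} \<subseteq> Nn" "emeasure (P m) Nn = 0" "Nn \<in> sets (P m)"
    using f(2) by (rule AE_E)
  let ?SS = "{S. S \<subseteq> {..<N} \<and> card S = m}"
  have finSS: "finite ?SS" by (rule finite_subset[of _ "Pow {..<N}"]) auto
  have predN: "Measurable.pred (P m) (\<lambda>y. y \<notin> Nn)"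
    using Nn(3) by (simp add: pred_def set_diff_eq[symmetric] sets.Diff)
  have AEN: "AE y in P m. y \<notin> Nn" using Nn(2,3) by (intro AE_not_in) auto
  have "AE x in P N. \<forall>S\<in>?SS. sel S x \<notin> Nn"
  proof (rule AE_finite_allI[OF finSS])
    fix S assume "S \<in> ?SS"
    then have S1: "S \<subseteq> {..<N}" and c: "card S = m" by auto
    show "AE x in P N. sel S x \<notin> Nn"
      by (rule AE_sel[OF S1]) (subst c, rule predN, subst c, rule AEN)
  qed
  then have AEG: "AE x in P N. G N m u x = G N m f x"
    using AE_space
  proof eventually_elim
    case (elim x)
    have "u (sel S x) = f (sel S x)" if S: "S \<in> ?SS" for S
    proof -
      have "sel S x \<in> space (P (card S))"
        using measurable_space[OF measurable_sel elim(2)] S by auto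
      then show ?thesis using S elim(1) Nn(1) by auto
    qed
    then show ?case unfolding G_Phi Phi_def by (auto intro!: sum.cong)
  qed
  have Cpos: "real (N choose m) > 0" using m by simp
  have fPhi: "Phi N m (\<lambda>_. 1) f \<in> borel_measurable (P N)" by (rule measurable_Phi[OF f(1) order_refl])
  show ?thesis
    unfolding prodM_def AE_completion_iff
  proof
    assume "AE x in P N. G N m u x = 0"
    then have AEP: "AE x in P N. Phi N m (\<lambda>_. 1) f x = 0"
      using AEG by eventually_elim (use Cpos in \<open>simp add: G_Phi\<close>)
    have "AE y in P m. f y = 0"
      by (rule main[OF m(2) _ f(1) AEP]) auto
    then show "AE y in P m. u y = 0" using f(2) by eventually_elim simp
  next
    assume "AE y in P m. u y = 0"
    then have f0: "AE y in P m. f y = 0" using f(2) by eventually_elim simp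
    have predf: "Measurable.pred (P m) (\<lambda>y. f y = 0)"
      unfolding pred_def by (rule borel_measurable_eq[OF f(1) borel_measurable_const])
    have "AE x in P N. \<forall>S\<in>?SS. f (sel S x) = 0"
    proof (rule AE_finite_allI[OF finSS])
      fix S assume "S \<in> ?SS"
      then have S1: "S \<subseteq> {..<N}" and c: "card S = m" by auto
      show "AE x in P N. f (sel S x) = 0"
        by (rule AE_sel[OF S1]) (subst c, rule predf, subst c, rule f0)
    qed
    then show "AE x in P N. G N m u x = 0"
      using AEG by eventually_elim (simp add: G_Phi Phi_def)
  qed
qed

end

theorem corollary1:
  fixes M :: "'a measure" and N m :: nat and u :: "(nat \<Rightarrow> 'a) \<Rightarrow> real"
  assumes "complete_measure M"
    and "sigma_finite_measure M"
    and "emeasure M (space M) \<noteq> 0"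
    and "1 \<le> m" and "m \<le> N"
    and "u \<in> borel_measurable (prodM M m)"
  shows "((AE x in prodM M N. G N m u x = 0) \<longleftrightarrow> (AE y in prodM M m. u y = 0))
    \<and> (\<forall>v \<in> borel_measurable (prodM M m).
          (AE x in prodM M N. G N m u x = G N m v x) \<longrightarrow> (AE y in prodM M m. u y = v y))"
proof -
  interpret LM M
    using assms(2,3) by (simp add: LM_def LM_axioms_def)
  have G_diff: "G N m (\<lambda>y. u y - v y) x = G N m u x - G N m v x" for v x
    unfolding G_def by (simp add: sum_subtractf right_diff_distrib)
  show ?thesis
  proof (intro conjI ballI impI)
    show "(AE x in prodM M N. G N m u x = 0) \<longleftrightarrow> (AE y in prodM M m. u y = 0)"
      by (rule G_iff[OF assms(6,4,5)])
  next
    fix v assume v: "v \<in> borel_measurable (prodM M m)"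
      and h: "AE x in prodM M N. G N m u x = G N m v x"
    have uv: "(\<lambda>y. u y - v y) \<in> borel_measurable (prodM M m)" using assms(6) v by measurable
    have "AE x in prodM M N. G N m (\<lambda>y. u y - v y) x = 0"
      using h by eventually_elim (simp add: G_diff)
    then have "AE y in prodM M m. u y - v y = 0"
      using G_iff[OF uv assms(4,5)] by simp
    then show "AE y in prodM M m. u y = v y" by eventually_elim simp
  qed
qed

end
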